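(* Let $U,V\in GL_n(\mathbb{C})$ and let $D$ be a diagonal $n\times n$ complex matrix. If every principal minor of $VU$ equals $1$, then the Newton polygons of $D$ and $UDV$ coincide.
   Context: For an $n\times n$ complex matrix $M$ with eigenvalues $\mu_1,\dots,\mu_n$ ordered so that $|\mu_1|\ge\dots\ge|\mu_n|$, the Newton polygon of $M$ is the polygonal line joining the points $(-n+k,\, s_1+\dots+s_k)$ for $k=0,\dots,n$, where $s_j=-\log|\mu_j|$ (with values in $\mathbb{R}\cup\{+\infty\}$). *)

theory Defs
  imports Complex_Main "HOL-Library.Extended_Real" "Jordan_Normal_Form.Char_Poly"
    "Jordan_Normal_Form.DL_Submatrix"
begin

definition eigenvalues_mset :: "complex mat \<Rightarrow> complex multiset" where
  "eigenvalues_mset A = proots (char_poly A)"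

definition slope_val :: "complex \<Rightarrow> ereal" where
  "slope_val \<mu> = (if \<mu> = 0 then PInfty else ereal (- ln (cmod \<mu>)))"

text \<open>Newton polygon: the list of vertices (-n+k, s_1+...+s_k), k = 0..n, where the
  eigenvalues are ordered by decreasing modulus (i.e. the s_j increasing).\<close>
definition newton_polygon :: "complex mat \<Rightarrow> (int \<times> ereal) list" where
  "newton_polygon A =
     (let n = dim_row A;
          ss = sorted_list_of_multiset (image_mset slope_val (eigenvalues_mset A))
      in map (\<lambda>k. (- int n + int k, sum_list (take k ss))) [0..<n+1])"

definition principal_minor :: "'a :: comm_ring_1 mat \<Rightarrow> nat set \<Rightarrow> 'a" where
  "principal_minor A I = det (submatrix A I I)"

end

theory Submission
  imports Defs
begin

definition shf :: "nat \<Rightarrow> nat \<Rightarrow> nat" where "shf i a = (if a < i then a else Suc a)"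

lemma strict_mono_shf: "strict_mono (shf i)"
  unfolding strict_mono_def shf_def by auto

lemma pick_image:
  assumes f: "strict_mono (f::nat\<Rightarrow>nat)" and k: "k < card I"
  shows "pick (f ` I) k = f (pick I k)"
  using k
proof (induction k)
  case 0
  then have ne: "I \<noteq> {}" by auto
  then obtain x where x: "x \<in> I" by auto
  have "(LEAST a. a \<in> f ` I) = f (LEAST a. a \<in> I)"
  proof (rule Least_equality)
    show "f (LEAST a. a \<in> I) \<in> f ` I" using x by (meson LeastI imageI)
    fix y assume "y \<in> f ` I"
    then obtain z where "z \<in> I" "y = f z" by auto
    then show "f (LEAST a. a \<in> I) \<le> y" using f by (simp add: Least_le strict_mono_less_eq)
  qed
  then show ?case by simp
next
  case (Suc k)
  then have IH: "pick (f ` I) k = f (pick I k)" by simp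
  have ex1: "pick I (Suc k) \<in> I" "pick I (Suc k) > pick I k"
    using pick_in_set_le[OF Suc.prems] pick_mono_le[OF Suc.prems, of k] by auto
  have "(LEAST a. a \<in> f ` I \<and> a > f (pick I k)) = f (LEAST b. b \<in> I \<and> b > pick I k)"
  proof (rule Least_equality)
    have "(LEAST b. b \<in> I \<and> b > pick I k) \<in> I \<and> (LEAST b. b \<in> I \<and> b > pick I k) > pick I k"
      using ex1 by (metis (mono_tags, lifting) LeastI)
    then show "f (LEAST b. b \<in> I \<and> b > pick I k) \<in> f ` I \<and> f (LEAST b. b \<in> I \<and> b > pick I k) > f (pick I k)"
      using f by (simp add: strict_mono_less)
    fix y assume "y \<in> f ` I \<and> f (pick I k) < y"
    then obtain z where "z \<in> I" "y = f z" "f (pick I k) < f z" by auto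
    then show "f (LEAST b. b \<in> I \<and> b > pick I k) \<le> y" using f
      by (simp add: Least_le strict_mono_less_eq strict_mono_less)
  qed
  then show ?case using IH by simp
qed

lemma pick_atLeast: "k < n \<Longrightarrow> pick {0..<n} k = k"
proof (induction k)
  case 0
  then show ?case by (simp add: Least_equality)
next
  case (Suc k)
  then show ?case by (simp, intro Least_equality, auto)
qed

lemma submatrix_full:
  assumes W: "W \<in> carrier_mat n n"
  shows "submatrix W {0..<n} {0..<n} = W"
proof -
  have c: "card {i. i < n \<and> i \<in> {0..<n}} = n" by simp
  show ?thesis
    by (rule eq_matI, insert W, auto simp: dim_submatrix submatrix_index pick_atLeast c)
qed

lemma submatrix_delete:
  assumes W: "W \<in> carrier_mat (Suc m) (Suc m)" and I: "I \<subseteq> {0..<m}"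
  shows "submatrix (mat_delete W i i) I I = submatrix W (shf i ` I) (shf i ` I)"
proof -
  have fI: "finite I" using I finite_subset by blast
  have c1: "card {j. j < m \<and> j \<in> I} = card I"
    using I by (metis (no_types, lifting) Collect_cong Collect_mem_eq atLeastLessThan_iff subset_eq)
  have sub: "shf i ` I \<subseteq> {0..<Suc m}" using I unfolding shf_def by auto
  have inj: "inj_on (shf i) I" using strict_mono_shf by (meson strict_mono_imp_inj_on)
  have c2: "card {j. j < Suc m \<and> j \<in> shf i ` I} = card I"
  proof -
    have "{j. j < Suc m \<and> j \<in> shf i ` I} = shf i ` I" using sub by auto
    then show ?thesis using card_image[OF inj] by simp
  qed
  show ?thesis
  proof (rule eq_matI)
    show "dim_row (submatrix (mat_delete W i i) I I) = dim_row (submatrix W (shf i ` I) (shf i ` I))"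
      "dim_col (submatrix (mat_delete W i i) I I) = dim_col (submatrix W (shf i ` I) (shf i ` I))"
      using W c1 c2 by (auto simp: dim_submatrix)
    fix a b assume "a < dim_row (submatrix W (shf i ` I) (shf i ` I))" "b < dim_col (submatrix W (shf i ` I) (shf i ` I))"
    then have ab: "a < card I" "b < card I" using W c2 by (auto simp: dim_submatrix)
    have pa: "pick I a < m" "pick I b < m" using pick_in_set_le[OF ab(1)] pick_in_set_le[OF ab(2)] I by auto
    have "submatrix (mat_delete W i i) I I $$ (a, b) = mat_delete W i i $$ (pick I a, pick I b)"
      by (rule submatrix_index, insert W c1 ab, auto)
    also have "\<dots> = W $$ (shf i (pick I a), shf i (pick I b))"
      using W pa unfolding mat_delete_def shf_def by auto
    also have "\<dots> = W $$ (pick (shf i ` I) a, pick (shf i ` I) b)"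
      using pick_image[OF strict_mono_shf ab(1)] pick_image[OF strict_mono_shf ab(2)] by simp
    also have "\<dots> = submatrix W (shf i ` I) (shf i ` I) $$ (a, b)"
      by (rule submatrix_index[symmetric], insert W c2 ab, auto)
    finally show "submatrix (mat_delete W i i) I I $$ (a, b) = submatrix W (shf i ` I) (shf i ` I) $$ (a, b)" .
  qed
qed

definition Nmat :: "nat \<Rightarrow> complex mat \<Rightarrow> nat set \<Rightarrow> complex \<Rightarrow> (nat \<Rightarrow> complex) \<Rightarrow> complex mat" where
  "Nmat n W S t d = mat n n (\<lambda>(a,b). if a \<in> S then W $$ (a,b) else (if a = b then t else 0) - d a * W $$ (a,b))"

lemma Nmat_carrier[simp]: "Nmat n W S t d \<in> carrier_mat n n" unfolding Nmat_def by simp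

lemma shf_image:
  assumes i: "i < Suc m" and S: "S \<subseteq> {0..<Suc m}" and iS: "i \<notin> S"
  shows "shf i ` ({0..<m} - {a. a < m \<and> shf i a \<in> S}) = {0..<Suc m} - insert i S"
proof (rule subset_antisym; rule subsetI)
  fix x assume "x \<in> shf i ` ({0..<m} - {a. a < m \<and> shf i a \<in> S})"
  then show "x \<in> {0..<Suc m} - insert i S" unfolding shf_def by auto
next
  fix x assume x: "x \<in> {0..<Suc m} - insert i S"
  show "x \<in> shf i ` ({0..<m} - {a. a < m \<and> shf i a \<in> S})"
  proof (cases "x < i")
    case True
    then have "x = shf i x" "x < m" using i unfolding shf_def by auto
    moreover have "x \<in> {0..<m} - {a. a < m \<and> shf i a \<in> S}" using x calculation by auto
    ultimately show ?thesis by (metis rev_image_eqI)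
  next
    case False
    then have "x > i" using x by auto
    then have "x = shf i (x - 1)" "x - 1 < m" using x unfolding shf_def by auto
    moreover have "x - 1 \<in> {0..<m} - {a. a < m \<and> shf i a \<in> S}" using x calculation by auto
    ultimately show ?thesis by (metis rev_image_eqI)
  qed
qed

lemma main_det:
  assumes "W \<in> carrier_mat n n" "S \<subseteq> {0..<n}"
    "\<And>I. I \<subseteq> {0..<n} \<Longrightarrow> I \<noteq> {} \<Longrightarrow> det (submatrix W I I) = 1"
  shows "det (Nmat n W S t d) = (\<Prod>j\<in>{0..<n} - S. t - d j)"
  using assms
proof (induction n arbitrary: W S d)
  case (0 W S d)
  then show ?case by simp
next
  case (Suc m W S d)
  let ?n = "Suc m"
  note WC = Suc.prems(1) and hyp = Suc.prems(3) and OIH = Suc.IH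
  have "\<forall>S. S \<subseteq> {0..<?n} \<longrightarrow> card ({0..<?n} - S) = k \<longrightarrow> det (Nmat ?n W S t d) = (\<Prod>j\<in>{0..<?n} - S. t - d j)" for k
  proof (induction k)
    case 0
    show ?case
    proof (intro allI impI)
      fix S assume S: "S \<subseteq> {0..<?n}" "card ({0..<?n} - S) = 0"
      then have S': "S = {0..<?n}" by auto
      have "Nmat ?n W S t d = W" using WC S' by (intro eq_matI, auto simp: Nmat_def)
      moreover have "det W = 1" using hyp[of "{0..<?n}"] submatrix_full[OF WC] by simp
      ultimately show "det (Nmat ?n W S t d) = (\<Prod>j\<in>{0..<?n} - S. t - d j)" using S' by simp
    qed
  next
    case (Suc k)
    show ?case
    proof (intro allI impI)
      fix S assume S: "S \<subseteq> {0..<?n}" "card ({0..<?n} - S) = Suc k"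
      then obtain i where i: "i \<in> {0..<?n} - S" by (metis card.empty all_not_in_conv nat.distinct(1))
      then have ilt: "i < ?n" and iS: "i \<notin> S" by auto
      define N where "N = Nmat ?n W S t d"
      define N2 where "N2 = Nmat ?n W (insert i S) t d"
      have N: "N \<in> carrier_mat ?n ?n" "N2 \<in> carrier_mat ?n ?n" unfolding N_def N2_def by auto
      have del: "mat_delete N i j = mat_delete N2 i j" for j
        unfolding N_def N2_def mat_delete_def Nmat_def by (rule eq_matI, auto)
      have "det N = (\<Sum>j<?n. N $$ (i,j) * cofactor N i j)" by (rule laplace_expansion_row[OF N(1) ilt])
      also have "\<dots> = (\<Sum>j<?n. ((if i = j then t else 0) - d i * W $$ (i,j)) * cofactor N i j)"
        using iS ilt unfolding N_def Nmat_def by (intro sum.cong, auto)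
      also have "\<dots> = (\<Sum>j<?n. (if i = j then t else 0) * cofactor N i j) - d i * (\<Sum>j<?n. W $$ (i,j) * cofactor N i j)"
        by (simp add: algebra_simps sum_subtractf sum_distrib_left)
      also have "(\<Sum>j<?n. (if i = j then t else 0) * cofactor N i j) = t * cofactor N i i"
      proof -
        have "(\<Sum>j<?n. (if i = j then t else 0) * cofactor N i j) = (\<Sum>j<?n. if i = j then t * cofactor N i j else 0)"
          by (intro sum.cong) auto
        then show ?thesis using ilt by simp
      qed
      also have "(\<Sum>j<?n. W $$ (i,j) * cofactor N i j) = det N2"
      proof -
        have "det N2 = (\<Sum>j<?n. N2 $$ (i,j) * cofactor N2 i j)" by (rule laplace_expansion_row[OF N(2) ilt])
        also have "\<dots> = (\<Sum>j<?n. W $$ (i,j) * cofactor N i j)"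
          using ilt unfolding cofactor_def del by (intro sum.cong, auto simp: N2_def Nmat_def)
        finally show ?thesis by simp
      qed
      finally have eq1: "det N = t * cofactor N i i - d i * det N2" .
      define S' where "S' = {a. a < m \<and> shf i a \<in> S}"
      have md: "mat_delete N i i = Nmat m (mat_delete W i i) S' t (\<lambda>a. d (shf i a))"
      proof (rule eq_matI)
        fix a b assume "a < dim_row (Nmat m (mat_delete W i i) S' t (\<lambda>a. d (shf i a)))"
          "b < dim_col (Nmat m (mat_delete W i i) S' t (\<lambda>a. d (shf i a)))"
        then have ab: "a < m" "b < m" unfolding Nmat_def by auto
        have "mat_delete N i i $$ (a,b) = N $$ (shf i a, shf i b)"
          using ab unfolding mat_delete_def shf_def N_def Nmat_def by simp
        also have "\<dots> = Nmat m (mat_delete W i i) S' t (\<lambda>a. d (shf i a)) $$ (a,b)"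
        proof -
          have "shf i a < ?n" "shf i b < ?n" using ab unfolding shf_def by auto
          moreover have "mat_delete W i i $$ (a,b) = W $$ (shf i a, shf i b)"
            using ab WC unfolding mat_delete_def shf_def by simp
          moreover have "(shf i a = shf i b) = (a = b)" using strict_mono_shf strict_mono_eq by metis
          moreover have "(a \<in> S') = (shf i a \<in> S)" using ab unfolding S'_def by simp
          ultimately show ?thesis unfolding N_def Nmat_def using ab by simp
        qed
        finally show "mat_delete N i i $$ (a,b) = Nmat m (mat_delete W i i) S' t (\<lambda>a. d (shf i a)) $$ (a,b)" .
      qed (simp_all add: N_def Nmat_def)
      have "det (Nmat m (mat_delete W i i) S' t (\<lambda>a. d (shf i a))) = (\<Prod>a\<in>{0..<m} - S'. t - d (shf i a))"
      proof (rule OIH)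
        show "mat_delete W i i \<in> carrier_mat m m" using mat_delete_carrier[OF WC] by simp
        show "S' \<subseteq> {0..<m}" unfolding S'_def by auto
        fix I assume I: "I \<subseteq> {0..<m}" "I \<noteq> {}"
        have "shf i ` I \<subseteq> {0..<?n}" using I unfolding shf_def by auto
        then show "det (submatrix (mat_delete W i i) I I) = 1"
        proof -
          have "shf i ` I \<noteq> {}" using I(2) by simp
          then show ?thesis unfolding submatrix_delete[OF WC I(1)] using hyp[OF \<open>shf i ` I \<subseteq> {0..<?n}\<close>] by simp
        qed
      qed
      also have "\<dots> = (\<Prod>j\<in>{0..<?n} - insert i S. t - d j)"
      proof -
        have inj: "inj_on (shf i) ({0..<m} - S')" using strict_mono_shf by (meson strict_mono_imp_inj_on)
        show ?thesis unfolding shf_image[OF ilt S(1) iS, folded S'_def, symmetric] prod.reindex[OF inj] by simp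
      qed
      finally have c: "cofactor N i i = (\<Prod>j\<in>{0..<?n} - insert i S. t - d j)"
        unfolding cofactor_def md by simp
      have card2: "card ({0..<?n} - insert i S) = k" using S(2) i
        by (metis Diff_insert card_Diff_singleton diff_Suc_1)
      have d2: "det N2 = (\<Prod>j\<in>{0..<?n} - insert i S. t - d j)"
      proof -
        have "insert i S \<subseteq> {0..<?n}" using S(1) ilt by auto
        from Suc.IH[rule_format, OF this card2] show ?thesis unfolding N2_def .
      qed
      have "(\<Prod>j\<in>{0..<?n} - S. t - d j) = (t - d i) * (\<Prod>j\<in>{0..<?n} - S - {i}. t - d j)"
        using i by (simp add: prod.remove)
      moreover have "{0..<?n} - insert i S = {0..<?n} - S - {i}" by auto
      ultimately show "det (Nmat ?n W S t d) = (\<Prod>j\<in>{0..<?n} - S. t - d j)"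
        using eq1 c d2 unfolding N_def by (simp add: left_diff_distrib)
    qed
  qed
  then show ?case using Suc.prems(2) by blast
qed


lemma diag_mult:
  assumes D: "D \<in> carrier_mat n n" and dg: "diagonal_mat D" and W: "W \<in> carrier_mat n n"
    and ab: "a < n" "b < n"
  shows "(D * W) $$ (a,b) = D $$ (a,a) * W $$ (a,b)"
proof -
  have "(D * W) $$ (a,b) = (\<Sum>k\<in>{0..<n}. D $$ (a,k) * W $$ (k,b))"
    using D W ab by (simp add: scalar_prod_def)
  also have "\<dots> = (\<Sum>k\<in>{0..<n}. if k = a then D $$ (a,a) * W $$ (a,b) else 0)"
    using dg D ab unfolding diagonal_mat_def by (intro sum.cong) auto
  also have "\<dots> = D $$ (a,a) * W $$ (a,b)" using ab by simp
  finally show ?thesis .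
qed

lemma prod_list_upt: "prod_list (map f [0..<n]) = (\<Prod>j\<in>{0..<n}. (f j :: complex))"
  by (induction n) auto

lemma charpoly_DW:
  fixes D W :: "complex mat"
  assumes D: "D \<in> carrier_mat n n" and dg: "diagonal_mat D" and W: "W \<in> carrier_mat n n"
    and hyp: "\<And>I. I \<subseteq> {0..<n} \<Longrightarrow> I \<noteq> {} \<Longrightarrow> det (submatrix W I I) = 1"
  shows "char_poly (D * W) = char_poly D"
proof -
  have DW: "D * W \<in> carrier_mat n n" using D W by simp
  have ut: "upper_triangular D" using dg D unfolding diagonal_mat_def upper_triangular_def by auto
  have "poly (char_poly (D * W)) t = poly (char_poly D) t" for t
  proof -
    have "- (char_matrix (D * W) t) = Nmat n W {} t (\<lambda>j. D $$ (j,j))"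
    proof (rule eq_matI)
      fix a b assume "a < dim_row (Nmat n W {} t (\<lambda>j. D $$ (j,j)))" "b < dim_col (Nmat n W {} t (\<lambda>j. D $$ (j,j)))"
      then have ab: "a < n" "b < n" unfolding Nmat_def by auto
      show "(- char_matrix (D * W) t) $$ (a,b) = Nmat n W {} t (\<lambda>j. D $$ (j,j)) $$ (a,b)"
        using ab DW diag_mult[OF D dg W ab] unfolding char_matrix_def Nmat_def by auto
    qed (insert DW, auto simp: char_matrix_def Nmat_def)
    then have "poly (char_poly (D * W)) t = (\<Prod>j\<in>{0..<n} - {}. t - D $$ (j,j))"
      unfolding char_poly_matrix[OF DW] using main_det[OF W _ hyp] by simp
    also have "\<dots> = poly (char_poly D) t"
      unfolding char_poly_upper_triangular[OF D ut] poly_prod_list diag_mat_def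
      using D by (simp add: o_def prod_list_upt)
    finally show ?thesis .
  qed
  then show ?thesis using poly_eq_poly_eq_iff by blast
qed

theorem proposition4p5:
  fixes U V D :: "complex mat" and n :: nat
  assumes "U \<in> carrier_mat n n" "V \<in> carrier_mat n n" "D \<in> carrier_mat n n"
    and "invertible_mat U" "invertible_mat V"
    and "diagonal_mat D"
    and "\<And>I. I \<subseteq> {0..<n} \<Longrightarrow> I \<noteq> {} \<Longrightarrow> principal_minor (V * U) I = 1"
  shows "newton_polygon (U * D * V) = newton_polygon D"
proof -
  note U = assms(1) and V = assms(2) and D = assms(3)
  from assms(4) obtain B where B: "inverts_mat U B" "inverts_mat B U"
    unfolding invertible_mat_def by auto
  have UB: "U * B = 1\<^sub>m n" using B(1) U unfolding inverts_mat_def by simp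
  have Bc: "B \<in> carrier_mat n n"
  proof -
    have "dim_col B = n" using UB by (metis index_mult_mat(3) index_one_mat(3))
    moreover have "dim_row B = n" using B(2) U unfolding inverts_mat_def
      by (metis carrier_matD(2) index_mult_mat(3) index_one_mat(3))
    ultimately show ?thesis by auto
  qed
  have BU: "B * U = 1\<^sub>m n" using B(2) Bc unfolding inverts_mat_def by simp
  have W: "V * U \<in> carrier_mat n n" using U V by simp
  have eq: "U * D * V = U * (D * (V * U)) * B"
  proof -
    have "U * (D * (V * U)) = U * D * (V * U)" using U D W by (simp add: assoc_mult_mat)
    also have "\<dots> = U * D * V * U" using U D V by (metis assoc_mult_mat mult_carrier_mat)
    finally have "U * (D * (V * U)) * B = U * D * V * U * B" by simp
    also have "\<dots> = U * D * V * (U * B)" using U D V Bc by (metis assoc_mult_mat mult_carrier_mat)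
    also have "\<dots> = U * D * V" using UB U D V by simp
    finally show ?thesis by simp
  qed
  have sim: "similar_mat (U * D * V) (D * (V * U))"
    by (rule similar_matI[where n = n and P = U and Q = B], insert U D V W Bc UB BU eq, auto)
  have "char_poly (U * D * V) = char_poly (D * (V * U))" by (rule char_poly_similar[OF sim])
  also have "\<dots> = char_poly D"
    by (rule charpoly_DW[OF D assms(6) W], insert assms(7), auto simp: principal_minor_def)
  finally have cp: "char_poly (U * D * V) = char_poly D" .
  have "dim_row (U * D * V) = dim_row D" using U D by simp
  then show ?thesis unfolding newton_polygon_def eigenvalues_mset_def cp by simp
qed

end
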